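(* For every integer $N\ge 5$ there exists $q_0(N)$ such that for all prime powers $q\ge q_0(N)$, $$f^{\mathrm{opt}}(N,q)=u\bigl(f^{\mathrm{opt}}(\cdot,q),N,q,k^*(N)\bigr).$$
   Context: Let $f(n,q)$ denote the smallest size of a set of lines of $\mathrm{PG}(n,q)$ (projective space over $\mathbb F_q$) such that every plane contains one of them; its values for small $n$ are $f(-1,q)=f(0,q)=f(1,q)=0$, $f(2,q)=1$, $f(3,q)=q^2+1$, $f(4,q)=q^4+2q^2+q+1$. For $n\ge1$ and a function $\phi$ defined on $\{-1,0,\dots,n-1\}$ with $\phi(-1)=0$, and $-1\le k\le\frac{n-1}{2}$, set $$u(\phi,n,q,k)=q^{2k+2}\phi(n-k-1)+\phi(k)+\Bigl(\sum_{i=0}^kq^i\Bigr)\Bigl(\sum_{j=k}^{n-2}q^j\Bigr).$$ Define $f^{\mathrm{opt}}(n,q)=f(n,q)$ for $-1\le n\le 4$, and recursively $f^{\mathrm{opt}}(n,q)=\min_{0\le k\le\frac{n-1}{2}}u(f^{\mathrm{opt}}(\cdot,q),n,q,k)$ for $n\ge5$. For a positive integer $n$, $k^*(n):=n-2^{\lfloor\log_2 n\rfloor}$ is the unique integer $0\le k\le\frac{n-1}{2}$ such that $n-k$ is a power of $2$. *)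

theory Defs
  imports Complex_Main "HOL-Number_Theory.Prime_Powers"
begin

definition f_small :: "int \<Rightarrow> nat \<Rightarrow> nat" where
  "f_small n q =
     (if n = 2 then 1
      else if n = 3 then q^2 + 1
      else if n = 4 then q^4 + 2*q^2 + q + 1
      else 0)"

definition u :: "(int \<Rightarrow> nat) \<Rightarrow> int \<Rightarrow> nat \<Rightarrow> int \<Rightarrow> nat" where
  "u \<phi> n q k =
     q ^ nat (2*k + 2) * \<phi> (n - k - 1) + \<phi> k
     + (\<Sum>i\<in>{0..k}. q ^ nat i) * (\<Sum>j\<in>{k..n-2}. q ^ nat j)"

text \<open>f^opt; the function argument passed to u is restricted to indices < n
  (u only evaluates it there when 0 <= k), which makes the recursion well-founded.\<close>
function fopt :: "int \<Rightarrow> nat \<Rightarrow> nat" where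
  "fopt n q =
     (if n \<le> 4 then f_small n q
      else Min ((\<lambda>k. u (\<lambda>m. if m < n then fopt m q else 0) n q k) ` {0..(n-1) div 2}))"
  by auto
termination
  by (relation "measure (\<lambda>(n, q). nat (n + 2))") auto

definition kstar :: "nat \<Rightarrow> nat" where
  "kstar n = n - 2 ^ nat \<lfloor>log 2 (real n)\<rfloor>"

end

theory Submission
  imports Defs
begin


lemma ineqA:
  fixes Q X Y :: real
  assumes Q: "Q \<ge> 2" and X: "X \<ge> 1" and Y: "Y \<ge> 1"
  shows "(Q*X-1)*(Q*X-Q)/(Q*((Q-1)*(Q+1))*(Q-1)) \<le> (Q*X*Y)*(Q*X*Y-1)/(Q*(Q-1)) - Q^2*X^2*(Y*(Y-1)/(Q*(Q-1)))"
proof -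
  have q: "Q \<noteq> 0" "Q - 1 \<noteq> 0" "Q + 1 \<noteq> 0" using Q by auto
  have r: "(Q*X*Y)*(Q*X*Y-1)/(Q*(Q-1)) - Q^2*X^2*(Y*(Y-1)/(Q*(Q-1))) = (Q*X-1)/(Q-1) * (X*Y)"
    using q by (simp add: divide_simps) (simp add: algebra_simps power2_eq_square)
  have l: "(Q*X-1)*(Q*X-Q)/(Q*((Q-1)*(Q+1))*(Q-1)) = (Q*X-1)/(Q-1) * ((X-1)/((Q-1)*(Q+1)))"
    using q by (simp add: divide_simps) (simp add: algebra_simps power2_eq_square)
  have d0: "1*3 \<le> (Q-1)*(Q+1)" using Q by (intro mult_mono) auto
  then have d: "(Q-1)*(Q+1) \<ge> 1" by simp
  have "(X-1)*1 \<le> (X-1)*((Q-1)*(Q+1))" using d X by (intro mult_left_mono) auto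
  then have c1: "(X-1)/((Q-1)*(Q+1)) \<le> X - 1" using d by (simp add: divide_le_eq)
  have "X*1 \<le> X*Y" using X Y by (intro mult_left_mono) auto
  then have "X - 1 \<le> X*Y" by simp
  with c1 have c2: "(X-1)/((Q-1)*(Q+1)) \<le> X*Y" by linarith
  have "1*1 \<le> Q*X" using Q X by (intro mult_mono) auto
  then have "(Q*X-1)/(Q-1) \<ge> 0" using Q by simp
  with c2 show ?thesis unfolding l r by (rule mult_left_mono)
qed

lemma ineqB:
  fixes Q K X Z :: real
  assumes Q: "Q \<ge> 2" and K: "K \<ge> 1" and X: "X \<ge> 1" and Z: "Z \<ge> Q"
  shows "(Q*K*Z-1)*(Q*K*Z-Q)/(Q*((Q-1)*(Q+1))*(Q-1)) \<le> Q^2*K^2*((X*Z)*(X*Z-1)/(Q*(Q-1)) - Z^2*(X*(X-1)/(Q*(Q-1))))"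
proof -
  have q: "Q \<noteq> 0" "Q - 1 \<noteq> 0" "Q + 1 \<noteq> 0" using Q by auto
  have r: "Q^2*K^2*((X*Z)*(X*Z-1)/(Q*(Q-1)) - Z^2*(X*(X-1)/(Q*(Q-1)))) = (Q*K*K*Z/(Q-1)) * (X*(Z-1))"
    using q by (simp add: divide_simps) (simp add: algebra_simps power2_eq_square)
  have l: "(Q*K*Z-1)*(Q*K*Z-Q)/(Q*((Q-1)*(Q+1))*(Q-1)) = (Q*K*Z-1)*(K*Z-1)/((Q-1)*(Q+1)*(Q-1))"
    using q by (simp add: divide_simps) (simp add: algebra_simps power2_eq_square)
  have KZ0: "1*2 \<le> K*Z" using K Z Q by (intro mult_mono) auto
  then have KZ: "K*Z \<ge> 2" by simp
  have n1: "(Q*K*Z-1)*(K*Z-1) \<le> (Q*K*Z)*(K*Z)"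
    using KZ Q by (intro mult_mono) (auto simp: mult.assoc)
  have d0: "1*3 \<le> (Q-1)*(Q+1)" using Q by (intro mult_mono) auto
  then have d: "(Q-1)*(Q+1) \<ge> 3" by simp
  have pos: "(Q-1)*(Q+1)*(Q-1) > 0" using Q by auto
  have "(Q*K*Z-1)*(K*Z-1)/((Q-1)*(Q+1)*(Q-1)) \<le> (Q*K*Z)*(K*Z)/((Q-1)*(Q+1)*(Q-1))"
    using n1 pos by (simp add: divide_right_mono)
  also have "\<dots> = (Q*K*K*Z/(Q-1)) * (Z / ((Q-1)*(Q+1)))"
    using q by (simp add: divide_simps)
  also have "\<dots> \<le> (Q*K*K*Z/(Q-1)) * (X*(Z-1))"
  proof (rule mult_left_mono)
    have "Z \<le> 3 * (Z - 1)" using Z Q by simp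
    also have "\<dots> \<le> ((Q-1)*(Q+1)) * (X*(Z-1))"
      using d X Z Q by (intro mult_mono) auto
    finally show "Z / ((Q-1)*(Q+1)) \<le> X*(Z-1)" using d by (simp add: divide_le_eq mult.commute)
    show "0 \<le> Q*K*K*Z/(Q-1)" using Q K Z by simp
  qed
  finally show ?thesis unfolding l r .
qed

declare fopt.simps[simp del]

lemma alg1:
  fixes Q X Y :: real
  assumes "Q \<noteq> 0" "Q \<noteq> 1" "Q+1 \<noteq> 0"
  shows "(Q*X*Y - 1) * (Q*X*Y - Q) / (Q * ((Q - 1)*(Q+1)) * (Q - 1)) =
    Q^2*X^2 * ((Y - 1) * (Y - Q) / (Q * ((Q - 1)*(Q+1)) * (Q - 1))) + (Q*X - 1) * (Q*X - Q) / (Q * ((Q - 1)*(Q+1)) * (Q - 1))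
     + ((Q*X - 1)/(Q - 1)) * (X * (Y - 1)/(Q - 1))"
proof -
  have "Q - 1 \<noteq> 0" using assms by auto
  then show ?thesis using assms apply (simp add: divide_simps)
    by (simp add: algebra_simps power2_eq_square)
qed

lemma alg2:
  fixes Q X :: real
  assumes "Q \<noteq> 0" "Q \<noteq> 1" "Q+1 \<noteq> 0"
  shows "(Q*X - 1) * (Q*X - Q) / (Q * ((Q - 1)*(Q+1)) * (Q - 1)) - (X - 1) * (X - Q) / (Q * ((Q - 1)*(Q+1)) * (Q - 1))
     = X * (X - 1) / (Q * (Q - 1))"
proof -
  have "Q - 1 \<noteq> 0" using assms by auto
  then show ?thesis using assms apply (simp add: divide_simps)
    by (simp add: algebra_simps power2_eq_square)
qed

definition Gr :: "nat \<Rightarrow> nat \<Rightarrow> real" where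
  "Gr q n = (real q ^ n - 1) * (real q ^ n - real q) / (real q * ((real q - 1) * (real q + 1)) * (real q - 1))"

definition Ee :: "nat \<Rightarrow> nat \<Rightarrow> real" where
  "Ee q k = real q ^ k * (real q ^ k - 1) / (real q * (real q - 1))"

definition hh :: "nat \<Rightarrow> nat \<Rightarrow> real" where
  "hh q n = Gr q n - real (fopt (int n) q)"

definition HH :: "nat \<Rightarrow> nat \<Rightarrow> nat \<Rightarrow> real" where
  "HH q n k = real q ^ (2*k+2) * hh q (n-k-1) + hh q k + Ee q k"

lemma Gr_Suc: assumes "q \<ge> 2" shows "Gr q (k+1) = Gr q k + Ee q k"
proof -
  have "real q \<noteq> 0" "real q \<noteq> 1" "real q + 1 \<noteq> 0" using assms by auto
  from alg2[OF this, of "real q ^ k"] show ?thesis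
    unfolding Gr_def Ee_def by (simp add: algebra_simps)
qed

lemma Gr_split: assumes "q \<ge> 2"
  shows "Gr q (a+1+b) = real q^(2*a+2) * Gr q b + Gr q (a+1)
     + ((real q^(a+1) - 1)/(real q - 1)) * (real q^a * (real q^b - 1)/(real q - 1))"
proof -
  have "real q \<noteq> 0" "real q \<noteq> 1" "real q + 1 \<noteq> 0" using assms by auto
  from alg1[OF this, of "real q ^ a" "real q ^ b"] show ?thesis
    unfolding Gr_def by (simp add: power_add power_mult power2_eq_square ac_simps)
qed

lemma Ee_nonneg: assumes "q \<ge> 2" shows "Ee q k \<ge> 0"
proof -
  have "real q ^ k \<ge> 1" using assms by simp
  then show ?thesis unfolding Ee_def using assms by simp
qed

lemma geo_sum:
  assumes "q \<ge> 2"
  shows "real (\<Sum>i\<in>{int a..int b}. q ^ nat i) = (if a \<le> b then (real q^(b+1) - real q^a)/(real q - 1) else 0)"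
proof (cases "a \<le> b")
  case True
  have "(\<Sum>i\<in>{int a..int b}. q ^ nat i) = (\<Sum>i\<in>{a..b}. q ^ i)"
    by (simp add: image_int_atLeastAtMost[symmetric] sum.reindex)
  then have "real (\<Sum>i\<in>{int a..int b}. q ^ nat i) = (\<Sum>i\<in>{a..b}. real q ^ i)" by simp
  moreover have "(1 - real q) * (\<Sum>i\<in>{a..b}. real q ^ i) = real q ^ a - real q ^ Suc b"
    using True by (rule sum_gp_multiplied)
  moreover have "real q - 1 \<noteq> 0" using assms by simp
  ultimately show ?thesis using True by (simp add: field_simps)
next
  case False then show ?thesis by simp
qed

lemma u_eq:
  assumes q: "q \<ge> 2" and kn: "k + 1 \<le> n"
  shows "real (u (\<lambda>m. fopt m q) (int n) q (int k)) = Gr q n - HH q n k"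
proof -
  define Q where "Q = real q"
  have s1: "real (\<Sum>i\<in>{0..int k}. q ^ nat i) = (Q^(k+1) - 1)/(Q-1)"
    using geo_sum[OF q, of 0 k] by (simp add: Q_def)
  have s2: "real (\<Sum>j\<in>{int k..int n - 2}. q ^ nat j) = Q^k * (Q^(n-k-1) - 1)/(Q-1)"
  proof (cases "n \<ge> 2")
    case True
    then have e: "int n - 2 = int (n-2)" by simp
    show ?thesis
    proof (cases "k \<le> n-2")
      case True
      obtain n' where n': "n = n' + 2" using \<open>n\<ge>2\<close> by (metis add.commute le_Suc_ex)
      have "Q^k * Q^(n-k-1) = Q^(n'+1)" using True n' by (simp flip: power_add)
      then show ?thesis unfolding e using geo_sum[OF q, of k "n-2"] True n'
        by (simp add: Q_def algebra_simps)
    next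
      case False
      then have "n - k - 1 = 0" using kn by simp
      then show ?thesis unfolding e using geo_sum[OF q, of k "n-2"] False by simp
    qed
  next
    case False
    then have "n - k - 1 = 0" "int k > int n - 2" using kn by auto
    then show ?thesis by simp
  qed
  have e1: "int n - int k - 1 = int (n-k-1)" using kn by simp
  have e2: "nat (2 * int k + 2) = 2*k+2" by simp
  have u1: "real (u (\<lambda>m. fopt m q) (int n) q (int k)) = Q^(2*k+2) * real (fopt (int (n-k-1)) q) + real (fopt (int k) q)
        + (Q^(k+1) - 1)/(Q-1) * (Q^k * (Q^(n-k-1) - 1)/(Q-1))"
    unfolding u_def e1 e2 using s1 s2 by (simp add: Q_def)
  have g: "Gr q n = Q^(2*k+2) * Gr q (n-k-1) + Gr q (k+1) + (Q^(k+1) - 1)/(Q-1) * (Q^k * (Q^(n-k-1) - 1)/(Q-1))"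
    using Gr_split[OF q, of k "n-k-1"] kn by (simp add: Q_def)
  show ?thesis unfolding u1 HH_def hh_def Q_def[symmetric] g Gr_Suc[OF q]
    by (simp add: algebra_simps)
qed

lemma fopt_small: "int n \<le> 4 \<Longrightarrow> fopt (int n) q = f_small (int n) q"
  by (subst fopt.simps) simp

lemma fopt_ge5:
  assumes "n \<ge> 5"
  shows "fopt (int n) q = Min ((\<lambda>k. u (\<lambda>m. fopt m q) (int n) q (int k)) ` {0..(n-1) div 2})"
proof -
  have d: "(int n - 1) div 2 = int ((n-1) div 2)" using assms by (simp add: zdiv_int of_nat_diff)
  have s: "{0..(int n - 1) div 2} = int ` {0..(n-1) div 2}" unfolding d image_int_atLeastAtMost by simp
  have r: "u (\<lambda>m. if m < int n then fopt m q else 0) (int n) q (int k) = u (\<lambda>m. fopt m q) (int n) q (int k)"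
    if "k \<in> {0..(n-1) div 2}" for k
  proof -
    have "k < n" using that assms by auto
    then show ?thesis unfolding u_def by simp
  qed
  have c: "\<not> int n \<le> 4" using assms by simp
  have "fopt (int n) q = Min ((\<lambda>k. u (\<lambda>m. if m < int n then fopt m q else 0) (int n) q k) ` {0..(int n - 1) div 2})"
    by (subst fopt.simps) (simp only: c if_False)
  also have "\<dots> = Min ((\<lambda>k. u (\<lambda>m. if m < int n then fopt m q else 0) (int n) q k) ` int ` {0..(n-1) div 2})"
    by (simp only: s)
  also have "\<dots> = Min ((\<lambda>k. u (\<lambda>m. fopt m q) (int n) q (int k)) ` {0..(n-1) div 2})"
    unfolding image_image by (rule arg_cong[where f=Min], rule image_cong) (simp_all only: r)
  finally show ?thesis .
qed

lemma Gr_vals: assumes "q \<ge> 2" shows "Gr q 0 = 0" "Gr q 1 = 0" "Gr q 2 = 1" "Gr q 3 = real q^2 + real q + 1"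
  "Gr q 4 = real q^4 + real q^3 + 2*real q^2 + real q + 1"
proof -
  have "real q \<noteq> 0" "real q - 1 \<noteq> 0" "real q + 1 \<noteq> 0" using assms by auto
  then show "Gr q 0 = 0" "Gr q 1 = 0" "Gr q 2 = 1" "Gr q 3 = real q^2 + real q + 1"
    "Gr q 4 = real q^4 + real q^3 + 2*real q^2 + real q + 1"
    unfolding Gr_def by (simp_all add: divide_simps) (simp_all add: algebra_simps power2_eq_square power3_eq_cube power4_eq_xxxx)
qed

lemma hh_vals: assumes "q \<ge> 2" shows "hh q 0 = 0" "hh q 1 = 0" "hh q 2 = 0" "hh q 3 = real q" "hh q 4 = real q^3"
  unfolding hh_def using Gr_vals[OF assms] fopt_small[of 0 q] fopt_small[of 1 q] fopt_small[of 2 q] fopt_small[of 3 q] fopt_small[of 4 q]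
  by (simp_all add: f_small_def)

lemma Ee_vals: assumes "q \<ge> 2" shows "Ee q 0 = 0" "Ee q 1 = 1" "Ee q 2 = real q^2 + real q"
proof -
  have "real q \<noteq> 0" "real q - 1 \<noteq> 0" "real q + 1 \<noteq> 0" using assms by auto
  then show "Ee q 0 = 0" "Ee q 1 = 1" "Ee q 2 = real q^2 + real q"
    unfolding Ee_def by (simp_all add: divide_simps) (simp_all add: algebra_simps power2_eq_square)
qed

lemma hh_mono1:
  assumes q: "q \<ge> 2" and n: "n \<ge> 1"
  shows "real q^2 * hh q (n-1) \<le> hh q n"
proof (cases "n \<ge> 5")
  case True
  have "fopt (int n) q \<le> u (\<lambda>m. fopt m q) (int n) q (int 0)"
    unfolding fopt_ge5[OF True] by (rule Min_le) (auto intro!: image_eqI[where x=0])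
  then have "real (fopt (int n) q) \<le> Gr q n - HH q n 0"
    using u_eq[OF q, of 0 n] True by simp
  then show ?thesis unfolding HH_def hh_def[of q n] using hh_vals[OF q] Ee_vals[OF q] by (simp add: power2_eq_square)
next
  case False
  then have "n = 1 \<or> n = 2 \<or> n = 3 \<or> n = 4" using n by auto
  moreover have "real q^2 * real q \<le> real q^3" by (simp add: power3_eq_cube power2_eq_square)
  ultimately show ?thesis using hh_vals[OF q] q by auto
qed

lemma hh_iter:
  assumes q: "q \<ge> 2" and j: "j \<le> n"
  shows "real q^(2*(n-j)) * hh q j \<le> hh q n"
  using j
proof (induction n)
  case 0 then show ?case by simp
next
  case (Suc n)
  show ?case
  proof (cases "j = Suc n")
    case True then show ?thesis by simp
  next
    case False
    then have "j \<le> n" using Suc by simp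
    then have ih: "real q^(2*(n-j)) * hh q j \<le> hh q n" using Suc by simp
    have e: "real q^(2*(Suc n-j)) = real q^2 * real q^(2*(n-j))"
      using \<open>j \<le> n\<close> by (simp add: Suc_diff_le power_add[symmetric])
    have "real q^(2*(Suc n-j)) * hh q j = real q^2 * (real q^(2*(n-j)) * hh q j)" unfolding e by simp
    also have "\<dots> \<le> real q^2 * hh q n" using ih by (simp add: mult_left_mono)
    also have "\<dots> \<le> hh q (Suc n)" using hh_mono1[OF q, of "Suc n"] by simp
    finally show ?thesis .
  qed
qed

lemma hh_nonneg: assumes q: "q \<ge> 2" shows "hh q n \<ge> 0"
  using hh_iter[OF q, of 0 n] hh_vals[OF q] by simp

lemma hhE_le: assumes q: "q \<ge> 2" shows "hh q k + Ee q k \<le> Gr q (k+1)"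
  unfolding hh_def Gr_Suc[OF q] by simp



lemma opt_from:
  assumes q: "q \<ge> 2" and n5: "n \<ge> 5" and K: "K \<le> (n-1) div 2"
    and opt: "\<forall>k \<le> (n-1) div 2. HH q n k \<le> HH q n K"
  shows "fopt (int n) q = u (\<lambda>m. fopt m q) (int n) q (int K)"
proof -
  have "Min ((\<lambda>k. u (\<lambda>m. fopt m q) (int n) q (int k)) ` {0..(n-1) div 2}) = u (\<lambda>m. fopt m q) (int n) q (int K)"
  proof (rule Min_eqI)
    show "finite ((\<lambda>k. u (\<lambda>m. fopt m q) (int n) q (int k)) ` {0..(n-1) div 2})" by simp
    show "u (\<lambda>m. fopt m q) (int n) q (int K) \<in> (\<lambda>k. u (\<lambda>m. fopt m q) (int n) q (int k)) ` {0..(n-1) div 2}"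
      using K by (intro imageI) simp
    fix y assume "y \<in> (\<lambda>k. u (\<lambda>m. fopt m q) (int n) q (int k)) ` {0..(n-1) div 2}"
    then obtain k where y: "y = u (\<lambda>m. fopt m q) (int n) q (int k)" and kA: "k \<in> {0..(n-1) div 2}"
      by (rule imageE)
    from kA have k: "k \<le> (n-1) div 2" by simp
    have kn: "k + 1 \<le> n" and Kn: "K + 1 \<le> n" using k K n5 by auto
    have e: "real (u (\<lambda>m. fopt m q) (int n) q (int k)) = Gr q n - HH q n k"
      "real (u (\<lambda>m. fopt m q) (int n) q (int K)) = Gr q n - HH q n K"
      by (rule u_eq[OF q kn], rule u_eq[OF q Kn])
    have "HH q n k \<le> HH q n K" using opt k by blast
    then have "real (u (\<lambda>m. fopt m q) (int n) q (int K)) \<le> real (u (\<lambda>m. fopt m q) (int n) q (int k))"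
      unfolding e by linarith
    then show "u (\<lambda>m. fopt m q) (int n) q (int K) \<le> y" unfolding y by (simp only: of_nat_le_iff)
  qed
  with fopt_ge5[OF n5] show ?thesis by (rule trans)
qed

lemma main:
  assumes q: "q \<ge> 2"
  shows "4 \<le> n \<Longrightarrow> 2^m \<le> n \<Longrightarrow> n < 2^(m+1) \<Longrightarrow>
     hh q n = HH q n (n - 2^m) \<and> (5 \<le> n \<longrightarrow> (\<forall>k \<le> (n-1) div 2. HH q n k \<le> HH q n (n - 2^m)))"
proof (induction n arbitrary: m rule: less_induct)
  case (less n)
  define Q where "Q = real q"
  have Q2: "Q \<ge> 2" using q Q_def by simp
  show ?case
  proof (cases "n = 4")
    case True
    have "m = 2"
    proof (rule ccontr)
      assume "m \<noteq> 2"
      then have "m \<le> 1 \<or> m \<ge> 3" by linarith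
      then show False
      proof
        assume "m \<le> 1"
        then have "(2::nat)^(m+1) \<le> 2^2" by (intro power_increasing) auto
        then show False using less.prems True by simp
      next
        assume "m \<ge> 3"
        then have "(2::nat)^3 \<le> 2^m" by (intro power_increasing) auto
        then show False using less.prems True by simp
      qed
    qed
    then show ?thesis using True hh_vals[OF q] Ee_vals[OF q]
      by (simp add: HH_def power2_eq_square power3_eq_cube)
  next
    case False
    then have n5: "n \<ge> 5" using less.prems by simp
    define K where "K = n - 2^m"
    have m2: "m \<ge> 2"
    proof (rule ccontr)
      assume "\<not> m \<ge> 2"
      then have "m \<le> 1" by simp
      then have "(2::nat)^(m+1) \<le> 2^2" by (intro power_increasing) auto
      then show False using less.prems n5 by simp
    qed
    have pm4: "(2::nat)^m \<ge> 4"
      using power_increasing[OF m2, of "2::nat"] by simp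
    have nK: "n - K - 1 = 2^m - 1" using less.prems K_def by simp
    have HK: "HH q n K = Q^(2*K+2) * hh q (2^m - 1) + hh q K + Ee q K"
      unfolding HH_def nK Q_def by simp
    have opt: "\<forall>k \<le> (n-1) div 2. HH q n k \<le> HH q n K"
    proof (intro allI impI)
      fix k' assume k': "k' \<le> (n-1) div 2"
      define a where "a = n - k' - 1"
      have Hk': "HH q n k' = Q^(2*k'+2) * hh q a + hh q k' + Ee q k'"
        unfolding HH_def a_def Q_def by simp
      have hk': "hh q k' + Ee q k' \<le> Gr q (k'+1)" by (rule hhE_le[OF q])
      consider "k' = K" | "k' < K" | "k' > K" by linarith
      then show "HH q n k' \<le> HH q n K"
      proof cases
        case 1 then show ?thesis by simp
      next
        case 2
        define b where "b = a - 2^m"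
        have ab: "a \<ge> 2^m" "a < n" "a < 2^(m+1)" using 2 K_def a_def less.prems by auto
        have Kb: "K = k' + b + 1" using 2 K_def a_def b_def ab by simp
        have IH: "hh q a = HH q a (a - 2^m)" using less.IH[of a m] ab pm4 by simp
        have a1: "a - b - 1 = 2^m - 1" using b_def ab by simp
        have ha: "hh q a = Q^(2*b+2) * hh q (2^m - 1) + hh q b + Ee q b"
          using IH unfolding HH_def b_def[symmetric] a1 Q_def by simp
        have p1: "Q^(2*K+2) = Q^(2*k'+2) * Q^(2*b+2)" unfolding Kb by (simp flip: power_add)
        have kb2: "2*(K-b) = 2*k'+2" using Kb by simp
        have "b \<le> K" using Kb by simp
        from hh_iter[OF q this] have p2: "Q^(2*k'+2) * hh q b \<le> hh q K"
          unfolding kb2 Q_def .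
        have p3: "Gr q (k'+1) \<le> Ee q K - Q^(2*k'+2) * Ee q b"
        proof -
          have X: "Q^k' \<ge> 1" "Q^b \<ge> 1" using Q2 by simp_all
          have e: "Q^(k'+1) = Q * Q^k'" "Q^K = Q * Q^k' * Q^b" "Q^(2*k'+2) = Q^2 * (Q^k')^2"
            unfolding Kb by (simp_all add: power_add power_mult ac_simps power2_eq_square)
          show ?thesis using ineqA[OF Q2 X] unfolding Gr_def Ee_def Q_def[symmetric] e
            by simp
        qed
        have "HH q n k' = Q^(2*k'+2) * Q^(2*b+2) * hh q (2^m - 1) + Q^(2*k'+2) * hh q b + Q^(2*k'+2) * Ee q b + (hh q k' + Ee q k')"
          unfolding Hk' ha by (simp only: distrib_left mult.assoc add.assoc)
        then have "HH q n k' = Q^(2*K+2) * hh q (2^m - 1) + Q^(2*k'+2) * hh q b + Q^(2*k'+2) * Ee q b + (hh q k' + Ee q k')"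
          unfolding p1 .
        then show ?thesis unfolding HK using p2 p3 hk' by linarith
      next
        case 3
        show ?thesis
        proof (cases "m = 2")
          case True
          have p45: "real q ^ 4 * real q = real q ^ 5" by (simp add: eval_nat_numeral)
          have nn: "n = 5 \<or> n = 6 \<or> n = 7" using n5 less.prems True by auto
          then have "n = 5" "k' = 2" "K = 1" using 3 k' K_def True by auto
          then have "HH q n k' = Q^2 + Q" "HH q n K = Q^5 + 1"
            unfolding HH_def using hh_vals[OF q] Ee_vals[OF q] p45 by (simp_all add: Q_def)
          moreover have "Q^2 + Q \<le> Q^5 + 1"
          proof -
            have "Q \<le> Q^2" using Q2 by (simp add: power2_eq_square)
            moreover have "2 * Q^2 \<le> Q^3" using Q2 by (simp add: power2_eq_square power3_eq_cube)
            moreover have "Q^3 \<le> Q^5" using Q2 by (intro power_increasing) auto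
            ultimately show ?thesis by simp
          qed
          ultimately show ?thesis by simp
        next
          case False
          then have m3: "m \<ge> 3" using m2 by simp
          define P :: nat where "P = 2^(m-1)"
          have mm: "m - 1 + 1 = m" using m3 by simp
          have pm: "(2::nat)^m = 2 * P" unfolding P_def using mm by (metis power_Suc Suc_eq_plus1)
          have pm8: "P \<ge> 4"
            using power_increasing[of 2 "m-1" "2::nat"] m3 unfolding P_def by simp
          define c :: nat where "c = P - 1"
          have a_ge: "a \<ge> P" using k' a_def less.prems pm by auto
          define b where "b = a - P"
          have a_lt: "a < 2^m - 1" using 3 a_def K_def less.prems by auto
          have bc: "b < c" using a_lt a_ge b_def c_def pm by linarith
          define d where "d = c - b"
          have d1: "d \<ge> 1" using bc d_def by linarith
          have kd: "k' = K + d" using a_def K_def d_def c_def b_def a_ge a_lt pm less.prems by linarith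
          have IH1: "a < 2^(m-1+1)" "2^(m-1) \<le> a" "4 \<le> a" "a < n"
            unfolding mm using a_ge a_lt pm8 n5 by (simp_all add: P_def a_def)
          have IHa: "hh q a = HH q a (a - P)"
            using less.IH[of a "m-1", OF IH1(4,3,2,1)] unfolding P_def by simp
          have a1: "a - b - 1 = c" using b_def a_ge c_def pm8 by linarith
          have ha: "hh q a = Q^(2*b+2) * hh q c + hh q b + Ee q b"
            using IHa unfolding HH_def b_def[symmetric] a1 Q_def by simp
          have IH2: "2^m - 1 < (2::nat)^(m-1+1)" "2^(m-1) \<le> (2::nat)^m - 1" "4 \<le> (2::nat)^m - 1" "(2::nat)^m - 1 < n"
            unfolding mm P_def[symmetric] using pm pm8 less.prems by linarith+
          have IHm: "hh q (2^m - 1) = HH q (2^m - 1) (2^m - 1 - P)"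
            using less.IH[of "2^m - 1" "m-1", OF IH2(4,3,2,1)] unfolding P_def by simp
          have c1: "2^m - 1 - P = c" "2^m - 1 - c - 1 = c" using c_def pm pm8 by linarith+
          have hm: "hh q (2^m - 1) = Q^(2*c+2) * hh q c + hh q c + Ee q c"
            using IHm unfolding HH_def c1 Q_def by simp
          have p1: "Q^(2*K+2) * Q^(2*c+2) = Q^(2*k'+2) * Q^(2*b+2)"
          proof -
            have "2*K+2 + (2*c+2) = 2*k'+2 + (2*b+2)" using kd d_def bc by simp
            then show ?thesis by (metis power_add)
          qed
          have p1': "Q^(2*k'+2) = Q^(2*K+2) * Q^(2*d)" unfolding kd by (simp flip: power_add)
          have p2: "Q^(2*d) * hh q b \<le> hh q c"
            using hh_iter[OF q, of b c] d_def bc unfolding Q_def by simp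
          have p2': "Q^(2*K+2) * (Q^(2*d) * hh q b) \<le> Q^(2*K+2) * hh q c"
            using p2 Q2 by (simp add: mult_left_mono)
          have p4: "0 \<le> hh q K + Ee q K" using hh_nonneg[OF q] Ee_nonneg[OF q] by (simp add: add_nonneg_nonneg)
          have p3: "Gr q (k'+1) \<le> Q^(2*K+2) * (Ee q c - Q^(2*d) * Ee q b)"
          proof -
            have X: "Q^K \<ge> 1" "Q^b \<ge> 1" "Q^d \<ge> Q" using Q2 d1
              by (simp_all add: power_increasing[of 1 d Q, simplified])
            have cbd: "c = b + d" using d_def bc by simp
            have e: "Q^(k'+1) = Q * Q^K * Q^d" "Q^c = Q^b * Q^d" "Q^(2*K+2) = Q^2 * (Q^K)^2" "Q^(2*d) = (Q^d)^2"
              unfolding kd cbd by (simp_all add: power_add power_mult ac_simps power2_eq_square)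
            show ?thesis using ineqB[OF Q2 X] unfolding Gr_def Ee_def Q_def[symmetric] e
              by simp
          qed
          have "HH q n k' = Q^(2*k'+2) * Q^(2*b+2) * hh q c + Q^(2*k'+2) * hh q b + Q^(2*k'+2) * Ee q b + (hh q k' + Ee q k')"
            unfolding Hk' ha by (simp only: distrib_left mult.assoc add.assoc)
          also have "\<dots> = Q^(2*K+2) * Q^(2*c+2) * hh q c + Q^(2*K+2) * (Q^(2*d) * hh q b) + Q^(2*K+2) * (Q^(2*d) * Ee q b) + (hh q k' + Ee q k')"
            unfolding p1[symmetric] unfolding p1' by (simp only: mult.assoc)
          finally have "HH q n k' = Q^(2*K+2) * Q^(2*c+2) * hh q c + Q^(2*K+2) * (Q^(2*d) * hh q b) + Q^(2*K+2) * (Q^(2*d) * Ee q b) + (hh q k' + Ee q k')" .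
          moreover have "HH q n K = Q^(2*K+2) * Q^(2*c+2) * hh q c + Q^(2*K+2) * hh q c + Q^(2*K+2) * Ee q c + (hh q K + Ee q K)"
            unfolding HK hm by (simp only: distrib_left mult.assoc add.assoc)
          moreover have "Q^(2*K+2) * (Ee q c - Q^(2*d) * Ee q b) = Q^(2*K+2) * Ee q c - Q^(2*K+2) * (Q^(2*d) * Ee q b)"
            by (simp only: right_diff_distrib)
          ultimately show ?thesis using p2' p3 p4 hk' by linarith
        qed
      qed
    qed
    have Kle: "K \<le> (n-1) div 2" using K_def less.prems by simp
    have "fopt (int n) q = u (\<lambda>m. fopt m q) (int n) q (int K)"
      by (rule opt_from[OF q n5 Kle opt])
    then have "real (fopt (int n) q) = Gr q n - HH q n K"
      using u_eq[OF q, of K n] Kle n5 by simp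
    then have "hh q n = HH q n K" unfolding hh_def by simp
    then show ?thesis using opt K_def by simp
  qed
qed


lemma kstar_eq:
  assumes "N \<ge> 1"
  obtains m where "2^m \<le> N" "N < 2^(m+1)" "kstar N = N - 2^m"
proof -
  define fl where "fl = \<lfloor>log 2 (real N)\<rfloor>"
  have "log 2 (real N) \<ge> 0" using assms by simp
  then have "fl \<ge> 0" unfolding fl_def by simp
  define m where "m = nat fl"
  have fm: "\<lfloor>log (real (2::nat)) (real N)\<rfloor> = int m" using \<open>fl \<ge> 0\<close> unfolding m_def fl_def by simp
  have "2^m \<le> N \<and> N < 2^(m+1)"
    using floor_log_nat_eq_powr_iff[of 2 N m] fm assms by simp
  moreover have "kstar N = N - 2^m" unfolding kstar_def m_def fl_def by simp
  ultimately show ?thesis using that by blast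
qed

theorem proposition3p38:
  fixes N :: nat
  assumes "N \<ge> 5"
  shows "\<exists>q0::nat. \<forall>q::nat. primepow q \<and> q \<ge> q0 \<longrightarrow>
           fopt (int N) q = u (\<lambda>m. fopt m q) (int N) q (int (kstar N))"
proof (intro exI[of _ 2] allI impI)
  fix q :: nat assume "primepow q \<and> q \<ge> 2"
  then have q: "q \<ge> 2" by simp
  obtain m where m: "2^m \<le> N" "N < 2^(m+1)" "kstar N = N - 2^m" using kstar_eq[of N] assms by auto
  have "\<forall>k \<le> (N-1) div 2. HH q N k \<le> HH q N (N - 2^m)"
    using main[OF q, of N m] m assms by simp
  moreover have "N - 2^m \<le> (N-1) div 2" using m by simp
  ultimately show "fopt (int N) q = u (\<lambda>m. fopt m q) (int N) q (int (kstar N))"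
    unfolding m(3) using opt_from[OF q assms] by blast
qed

end
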